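(* Let $J=\{q_1,\dots,q_n\}$ be a finite set of odd primes with $3\notin J$. For each $i$ fix $m_i\in\mathbb{N}$ and $e_i\in\{0,1\}$. Then at most $$\sum_{i=1}^n\frac{\phi(q_i^{m_i})}{2}+3$$ of the numbers in the set $$\{H_1\}\cup\{H_{a/(2^{e_i}q_i^{m_i})}:\ 1\le i\le n,\ 1\le a\le 2^{e_i}q_i^{m_i}-1\}$$ are linearly independent over $\overline{\mathbb{Q}}$.
   Context: $\phi$ is Euler's totient function and $\overline{\mathbb{Q}}$ is the field of algebraic numbers. For a complex number $r$ which is not a negative integer, $H_r=r\sum_{k=1}^{\infty}\frac{1}{k(r+k)}$; for integers $Q>1$ and $1\le a\le Q$ it satisfies Gauss's formula $H_{a/Q}=\frac Qa-\log(2Q)-\frac{\pi}{2}\cot(\pi a/Q)+2\sum_{k=1}^{\lfloor (Q-1)/2\rfloor}\cos(2\pi k a/Q)\log\sin(\pi k/Q)$. *)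

theory Defs
  imports Complex_Main "HOL-Computational_Algebra.Polynomial" "HOL-Number_Theory.Totient"
begin

definition harm :: "complex \<Rightarrow> complex" where
  "harm r = r * (\<Sum>k. 1 / (of_nat (Suc k) * (r + of_nat (Suc k))))"

definition alg_lin_indep :: "complex set \<Rightarrow> bool" where
  "alg_lin_indep S \<longleftrightarrow> finite S \<and>
     (\<forall>c. (\<forall>x\<in>S. algebraic (c x)) \<longrightarrow> (\<Sum>x\<in>S. c x * x) = 0 \<longrightarrow> (\<forall>x\<in>S. c x = 0))"

end

theory Submission
  imports Defs "HOL-Analysis.Gamma_Function"
begin

hide_const (open) Harmonic_Numbers.harm



lemma homog_solve:
  fixes P :: "complex \<Rightarrow> bool" and A :: "'i \<Rightarrow> 'k \<Rightarrow> complex"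
  assumes P0: "P 0" and P1: "P 1" and Padd: "\<And>x y. P x \<Longrightarrow> P y \<Longrightarrow> P (x+y)"
    and Pmult: "\<And>x y. P x \<Longrightarrow> P y \<Longrightarrow> P (x*y)" and Pneg: "\<And>x. P x \<Longrightarrow> P (-x)"
  shows "finite I \<Longrightarrow> finite K \<Longrightarrow> card I < card K \<Longrightarrow> (\<forall>i\<in>I. \<forall>k\<in>K. P (A i k)) \<Longrightarrow>
     \<exists>x. (\<forall>k\<in>K. P (x k)) \<and> (\<exists>k\<in>K. x k \<noteq> 0) \<and> (\<forall>i\<in>I. (\<Sum>k\<in>K. A i k * x k) = 0)"
proof (induction I arbitrary: K A rule: finite_induct)
  case empty
  then obtain k0 where "k0 \<in> K" by fastforce
  then show ?case
    by (intro exI[of _ "\<lambda>k. if k = k0 then 1 else 0"]) (auto simp: P0 P1)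
next
  case (insert i0 I K A)
  have Psum: "P (\<Sum>k\<in>F. f k)" if "finite F" "\<forall>k\<in>F. P (f k)" for F and f :: "'k \<Rightarrow> complex"
    using that by (induction F rule: finite_induct) (auto simp: P0 Padd)
  show ?case
  proof (cases "\<forall>k\<in>K. A i0 k = 0")
    case True
    from insert.prems have "card I < card K" using insert.hyps by simp
    with insert.IH[of K A] insert.prems obtain x where
      "(\<forall>k\<in>K. P (x k))" "(\<exists>k\<in>K. x k \<noteq> 0)" "(\<forall>i\<in>I. (\<Sum>k\<in>K. A i k * x k) = 0)" by auto
    then show ?thesis using True by (intro exI[of _ x]) auto
  next
    case False
    then obtain j where j: "j \<in> K" "A i0 j \<noteq> 0" by auto
    define K' where "K' = K - {j}"
    define A' where "A' i k = A i0 j * A i k - A i j * A i0 k" for i k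
    have fK': "finite K'" using insert.prems K'_def by auto
    have cK': "card I < card K'" using insert.prems insert.hyps j unfolding K'_def
      by (simp add: card_Diff_singleton)
    have PA': "\<forall>i\<in>I. \<forall>k\<in>K'. P (A' i k)"
    proof (intro ballI)
      fix i k assume "i \<in> I" "k \<in> K'"
      then have "P (A i0 j)" "P (A i k)" "P (A i j)" "P (A i0 k)" using insert.prems j unfolding K'_def by auto
      then have "P (A i0 j * A i k + - (A i j * A i0 k))" by (intro Padd Pneg Pmult)
      then show "P (A' i k)" unfolding A'_def by simp
    qed
    from insert.IH[OF fK' cK' PA'] obtain y where
      y: "\<forall>k\<in>K'. P (y k)" "\<exists>k\<in>K'. y k \<noteq> 0" "\<forall>i\<in>I. (\<Sum>k\<in>K'. A' i k * y k) = 0" by blast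
    define x where "x k = (if k = j then - (\<Sum>k\<in>K'. A i0 k * y k) else A i0 j * y k)" for k
    have sumsplit: "(\<Sum>k\<in>K. f k) = f j + (\<Sum>k\<in>K'. f k)" for f :: "'k \<Rightarrow> complex"
      using j insert.prems unfolding K'_def by (simp add: sum.remove)
    have xK': "\<And>k. k \<in> K' \<Longrightarrow> x k = A i0 j * y k" unfolding x_def K'_def by auto
    have "\<forall>k\<in>K. P (x k)"
    proof
      fix k assume k: "k \<in> K"
      show "P (x k)"
      proof (cases "k = j")
        case True
        then show ?thesis unfolding x_def using insert.prems y(1) fK'
          by (auto intro!: Pneg Psum Pmult simp: K'_def)
      next
        case False
        then show ?thesis unfolding x_def using insert.prems y(1) k j
          by (auto intro!: Pmult simp: K'_def)
      qed
    qed
    moreover have "\<exists>k\<in>K. x k \<noteq> 0"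
    proof -
      from y(2) obtain k where k: "k \<in> K'" "y k \<noteq> 0" by blast
      then have "x k \<noteq> 0" using xK' j by simp
      then show ?thesis using k unfolding K'_def by blast
    qed
    moreover have "\<forall>i\<in>insert i0 I. (\<Sum>k\<in>K. A i k * x k) = 0"
    proof
      fix i assume i: "i \<in> insert i0 I"
      have "(\<Sum>k\<in>K. A i k * x k) = A i j * x j + (\<Sum>k\<in>K'. A i k * (A i0 j * y k))"
        by (simp add: sumsplit xK')
      also have "\<dots> = (\<Sum>k\<in>K'. A' i k * y k)"
        unfolding x_def A'_def by (simp add: sum_distrib_left sum_subtractf algebra_simps)
      finally have eq: "(\<Sum>k\<in>K. A i k * x k) = (\<Sum>k\<in>K'. A' i k * y k)" .
      show "(\<Sum>k\<in>K. A i k * x k) = 0"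
      proof (cases "i = i0")
        case True
        then show ?thesis unfolding eq A'_def by simp
      next
        case False
        then show ?thesis using i y(3) eq by auto
      qed
    qed
    ultimately show ?thesis by blast
  qed
qed



definition cyc :: "nat \<Rightarrow> complex" where "cyc N = exp (2 * of_real pi * \<i> / of_nat N)"
definition Rg :: "nat \<Rightarrow> complex set" where
  "Rg N = {x. \<exists>r. (\<forall>k. r k \<in> \<rat>) \<and> x = (\<Sum>k<N. r k * cyc N ^ k)}"

lemma cyc_pow: "cyc N ^ n = exp (of_nat n * (2 * of_real pi * \<i> / of_nat N))"
  unfolding cyc_def by (rule exp_of_nat_mult[symmetric])

lemma cyc_pow_N: "N > 0 \<Longrightarrow> cyc N ^ N = 1"
  unfolding cyc_pow by simp

lemma cyc_pow_mod: assumes "N > 0" shows "cyc N ^ j = cyc N ^ (j mod N)"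
proof -
  have "cyc N ^ j = cyc N ^ (N * (j div N) + j mod N)" by simp
  also have "\<dots> = (cyc N ^ N) ^ (j div N) * cyc N ^ (j mod N)" by (simp only: power_add power_mult)
  finally show ?thesis using cyc_pow_N[OF assms] by simp
qed

lemma Rg_pow: assumes "N > 0" shows "cyc N ^ j \<in> Rg N"
proof -
  have e: "(\<lambda>k. (if k = j mod N then 1 else 0) * cyc N ^ k) = (\<lambda>k. if k = j mod N then cyc N ^ k else 0)"
    by auto
  have "(\<Sum>k<N. (if k = j mod N then 1 else 0) * cyc N ^ k) = cyc N ^ (j mod N)"
    unfolding e using assms by (simp add: sum.delta)
  then show ?thesis unfolding Rg_def using cyc_pow_mod[OF assms, of j]
    by (intro CollectI exI[of _ "\<lambda>k. if k = j mod N then 1 else 0"]) auto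
qed

lemma Rg_add: "x \<in> Rg N \<Longrightarrow> y \<in> Rg N \<Longrightarrow> x + y \<in> Rg N"
proof -
  assume "x \<in> Rg N" "y \<in> Rg N"
  then obtain r s where "\<forall>k. r k \<in> \<rat>" "x = (\<Sum>k<N. r k * cyc N ^ k)"
     "\<forall>k. s k \<in> \<rat>" "y = (\<Sum>k<N. s k * cyc N ^ k)" unfolding Rg_def by auto
  then show ?thesis unfolding Rg_def
    by (intro CollectI exI[of _ "\<lambda>k. r k + s k"]) (auto simp: sum.distrib algebra_simps)
qed

lemma Rg_scal: "q \<in> \<rat> \<Longrightarrow> x \<in> Rg N \<Longrightarrow> q * x \<in> Rg N"
proof -
  assume q: "q \<in> \<rat>" "x \<in> Rg N"
  then obtain r where "\<forall>k. r k \<in> \<rat>" "x = (\<Sum>k<N. r k * cyc N ^ k)" unfolding Rg_def by auto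
  then show ?thesis unfolding Rg_def using q
    by (intro CollectI exI[of _ "\<lambda>k. q * r k"]) (auto simp: sum_distrib_left algebra_simps)
qed

lemma Rg_0: "0 \<in> Rg N"
  unfolding Rg_def by (intro CollectI exI[of _ "\<lambda>k. 0"]) auto

lemma Rg_sum: "(\<And>i. i \<in> A \<Longrightarrow> f i \<in> Rg N) \<Longrightarrow> sum f A \<in> Rg N"
  by (induction A rule: infinite_finite_induct) (auto intro: Rg_0 Rg_add)

lemma Rg_rat: "N > 0 \<Longrightarrow> q \<in> \<rat> \<Longrightarrow> q \<in> Rg N"
  using Rg_scal[of q "cyc N ^ 0" N] Rg_pow[of N 0] by simp

lemma Rg_neg: "x \<in> Rg N \<Longrightarrow> - x \<in> Rg N"
  using Rg_scal[of "-1" x N] by simp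

lemma Rg_diff: "x \<in> Rg N \<Longrightarrow> y \<in> Rg N \<Longrightarrow> x - y \<in> Rg N"
  using Rg_add[of x N "-y"] Rg_neg[of y N] by simp

lemma Rg_mult: assumes "N > 0" "x \<in> Rg N" "y \<in> Rg N" shows "x * y \<in> Rg N"
proof -
  obtain r s where rs: "\<forall>k. r k \<in> \<rat>" "x = (\<Sum>k<N. r k * cyc N ^ k)"
     "\<forall>k. s k \<in> \<rat>" "y = (\<Sum>k<N. s k * cyc N ^ k)" using assms unfolding Rg_def by auto
  have "x * y = (\<Sum>k<N. \<Sum>l<N. (r k * s l) * cyc N ^ (k + l))"
    unfolding rs by (simp add: sum_product power_add algebra_simps)
  also have "\<dots> \<in> Rg N"
    using rs by (intro Rg_sum Rg_scal Rg_pow assms) auto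
  finally show ?thesis .
qed

lemma Rg_power: "N > 0 \<Longrightarrow> x \<in> Rg N \<Longrightarrow> x ^ n \<in> Rg N"
  by (induction n) (auto intro: Rg_mult Rg_rat)

lemma Rg_algebraic: assumes N: "N > 0" and x: "x \<in> Rg N" shows "algebraic x"
proof -
  have "\<forall>k. \<exists>c. (\<forall>j. c j \<in> \<rat>) \<and> x ^ k = (\<Sum>j<N. c j * cyc N ^ j)"
    using Rg_power[OF N x] unfolding Rg_def by blast
  then obtain c where c: "\<And>k j. c k j \<in> \<rat>" "\<And>k. x ^ k = (\<Sum>j<N. c k j * cyc N ^ j)"
    by metis
  have "\<exists>d. (\<forall>k\<in>{..N}. d k \<in> \<rat>) \<and> (\<exists>k\<in>{..N}. d k \<noteq> 0) \<and>
      (\<forall>j\<in>{..<N}. (\<Sum>k\<in>{..N}. c k j * d k) = 0)"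
    by (rule homog_solve[where P = "\<lambda>x. x \<in> \<rat>"]) (auto simp: c(1))
  then obtain d where d: "\<And>k. k \<le> N \<Longrightarrow> d k \<in> \<rat>" "\<exists>k\<le>N. d k \<noteq> 0"
      "\<And>j. j < N \<Longrightarrow> (\<Sum>k\<le>N. c k j * d k) = 0" by auto
  define p where "p = (\<Sum>k\<le>N. monom (d k) k)"
  have coeffp: "coeff p i = (if i \<le> N then d i else 0)" for i
    unfolding p_def by (simp add: coeff_sum coeff_monom)
  have "poly p x = (\<Sum>k\<le>N. d k * x ^ k)"
    unfolding p_def by (simp add: poly_sum poly_monom)
  also have "\<dots> = (\<Sum>k\<le>N. \<Sum>j<N. d k * c k j * cyc N ^ j)"
    by (simp add: c(2) sum_distrib_left mult.assoc)
  also have "\<dots> = (\<Sum>j<N. \<Sum>k\<le>N. d k * c k j * cyc N ^ j)"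
    by (rule sum.swap)
  also have "\<dots> = (\<Sum>j<N. (\<Sum>k\<le>N. c k j * d k) * cyc N ^ j)"
    unfolding sum_distrib_right by (simp add: mult_ac)
  also have "\<dots> = 0" using d(3) by simp
  finally have "poly p x = 0" .
  moreover have "p \<noteq> 0" using d(2) coeffp by (metis coeff_0)
  moreover have "\<forall>i. coeff p i \<in> \<rat>" using coeffp d(1) by simp
  ultimately show ?thesis by (intro algebraicI'[of p]) auto
qed

lemma cyc_frac: assumes "b dvd N" "N > 0"
  shows "cyc N ^ (a * (N div b)) = exp (2 * of_real pi * \<i> * of_nat a / of_nat b)"
proof -
  obtain c where c: "N = b * c" using assms(1) by auto
  with assms have bc: "b > 0" "c > 0" by auto
  then have "N div b = c" using c by simp
  then show ?thesis unfolding cyc_pow using bc c by (simp add: field_simps)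
qed

lemma inv_root:
  fixes w :: complex
  assumes "w ^ N = 1" "w \<noteq> 1" "N > 0"
  shows "1 / (w - 1) = (1 / of_nat N) * (\<Sum>j<N. of_nat j * w ^ j)"
proof -
  have tel: "(w - 1) * (\<Sum>j<n. of_nat j * w ^ j) = of_nat n * w ^ n - (\<Sum>j<n. w ^ Suc j)" for n
    by (induction n) (simp_all add: algebra_simps)
  have "(\<Sum>j<N. w ^ j) = 0" using assms by (simp add: sum_gp_strict)
  then have "(\<Sum>j<N. w ^ Suc j) = 0" by (simp add: sum_distrib_left[symmetric])
  with tel[of N] assms have "(w - 1) * (\<Sum>j<N. of_nat j * w ^ j) = of_nat N" by simp
  with assms show ?thesis by (simp add: field_simps)
qed

lemma i_Rg: assumes "4 dvd N" "N > 0" shows "\<i> \<in> Rg N"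
proof -
  have "cyc N ^ (1 * (N div 4)) = exp (2 * of_real pi * \<i> * of_nat 1 / of_nat 4)"
    by (rule cyc_frac[OF assms(1,2)])
  also have "\<dots> = cis (pi / 2)" by (simp add: cis_conv_exp mult_ac)
  also have "\<dots> = \<i>" by (simp add: cis.code complex_eq_iff)
  finally show ?thesis using Rg_pow[OF assms(2), of "1 * (N div 4)"] by simp
qed

lemma cot_Rg:
  assumes N: "N > 0" "b dvd N" "4 dvd N" and ab: "0 < a" "a < b"
  shows "cot (of_real pi * of_nat a / of_nat b) \<in> Rg N"
proof -
  define \<theta> where "\<theta> = of_real pi * of_nat a / (of_nat b :: complex)"
  define u where "u = exp (\<i> * \<theta>)"
  define w where "w = cyc N ^ (a * (N div b))"
  have wu: "w = u ^ 2" unfolding w_def u_def \<theta>_def cyc_frac[OF N(2,1)]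
    by (simp add: exp_of_nat_mult[symmetric] mult_ac)
  have u0: "u \<noteq> 0" unfolding u_def by simp
  have "\<theta> = of_real (pi * a / b)" unfolding \<theta>_def by simp
  moreover have "sin (pi * a / b) > 0"
    using ab by (intro sin_gt_zero) (auto simp: field_simps)
  ultimately have s0: "sin \<theta> \<noteq> 0" by (metis less_irrefl of_real_0 of_real_eq_iff sin_of_real)
  have sinu: "sin \<theta> = (u - inverse u) / (2 * \<i>)"
    unfolding u_def sin_exp_eq by (simp add: exp_minus)
  have cosu: "cos \<theta> = (u + inverse u) / 2"
    unfolding u_def cos_exp_eq by (simp add: exp_minus)
  have w1: "w \<noteq> 1"
  proof
    assume "w = 1"
    then have "u - inverse u = 0" using wu u0 by (simp add: field_simps power2_eq_square)
    then show False using s0 sinu by simp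
  qed
  have "cot \<theta> = \<i> * (w + 1) * (1 / (w - 1))"
    unfolding cot_def sinu cosu wu using u0 w1 wu
    by (simp add: field_simps power2_eq_square)
  also have "\<dots> \<in> Rg N"
  proof -
    have wN: "w ^ N = 1" unfolding w_def
      by (metis cyc_pow_N[OF N(1)] power_mult power_mult_distrib mult.commute power_one)
    have "1 / (w - 1) = (1 / of_nat N) * (\<Sum>j<N. of_nat j * w ^ j)"
      by (rule inv_root[OF wN w1 N(1)])
    also have "\<dots> \<in> Rg N"
      unfolding w_def
      by (intro Rg_scal Rg_sum) (auto simp: power_mult[symmetric] Rg_pow N)
    finally have "1 / (w - 1) \<in> Rg N" .
    moreover have "w \<in> Rg N" unfolding w_def by (rule Rg_pow[OF N(1)])
    ultimately show ?thesis
      using Rg_mult[OF N(1) Rg_mult[OF N(1) i_Rg[OF N(3) N(1)] Rg_add[OF \<open>w \<in> Rg N\<close> Rg_rat[OF N(1)]]], of 1 "1 / (w - 1)"]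
      by (simp only: Rats_1 simp_thms)
  qed
  finally show ?thesis unfolding \<theta>_def .
qed



lemma Digamma_refl:
  fixes z :: complex assumes z: "z \<notin> \<int>"
  shows "Digamma (1 - z) = Digamma z + of_real pi * cot (of_real pi * z)"
proof -
  define g where "g t = Gamma t * Gamma (1 - t) * sin (of_real pi * t)" for t :: complex
  have z1: "1 - z \<notin> \<int>" using z Ints_diff[of 1 "1 - z"] by auto
  have nz: "z \<notin> \<int>\<^sub>\<le>\<^sub>0" "1 - z \<notin> \<int>\<^sub>\<le>\<^sub>0" using z z1 nonpos_Ints_subset_Ints by auto
  have sinnz: "sin (of_real pi * t) \<noteq> 0" if "t \<notin> \<int>" for t :: complex
  proof
    assume "sin (of_real pi * t) = 0"
    then obtain n :: int where "of_real pi * t = of_real (of_int n * pi)" by (auto simp: sin_eq_0)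
    then have "t = of_int n" by (simp add: field_simps)
    then show False using that by auto
  qed
  have D: "(g has_field_derivative (Gamma z * Gamma (1 - z) * ((Digamma z - Digamma (1 - z)) *
      sin (of_real pi * z) + of_real pi * cos (of_real pi * z)))) (at z)"
    unfolding g_def using nz
    by (auto intro!: derivative_eq_intros simp: algebra_simps)
  have "eventually (\<lambda>t. t \<in> UNIV - \<int>) (nhds z)"
    using z by (intro eventually_nhds_in_open) (auto simp: open_Diff)
  then have ev: "eventually (\<lambda>t. g t = of_real pi) (nhds z)"
  proof (rule eventually_mono)
    fix t :: complex assume "t \<in> UNIV - \<int>"
    then have "t \<notin> \<int>" by auto
    then show "g t = of_real pi" unfolding g_def using Gamma_reflection_complex[of t] sinnz[of t]
      by (simp add: field_simps)
  qed
  have "(g has_field_derivative 0) (at z)"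
    by (subst DERIV_cong_ev[OF refl ev refl]) (rule DERIV_const)
  with D have "Gamma z * Gamma (1 - z) * ((Digamma z - Digamma (1 - z)) *
      sin (of_real pi * z) + of_real pi * cos (of_real pi * z)) = 0"
    using DERIV_unique by blast
  moreover have "Gamma z \<noteq> 0" "Gamma (1 - z) \<noteq> 0" using nz by (auto simp: Gamma_eq_zero_iff)
  ultimately have "(Digamma z - Digamma (1 - z)) * sin (of_real pi * z) + of_real pi * cos (of_real pi * z) = 0"
    by simp
  then show ?thesis using sinnz[OF z] unfolding cot_def by (simp add: field_simps)
qed

lemma sum_split_add: fixes a b :: nat and g :: "nat \<Rightarrow> 'a::comm_monoid_add" shows "(\<Sum>l<a+b. g l) = (\<Sum>l<a. g l) + (\<Sum>i<b. g (a + i))"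
  by (induction b) (simp_all add: add_ac)

lemma sum_group: fixes n m :: nat and g :: "nat \<Rightarrow> 'a::comm_monoid_add" shows "(\<Sum>l<n*m. g l) = (\<Sum>k<m. \<Sum>i<n. g (n*k + i))"
proof (induction m)
  case (Suc m)
  have "(\<Sum>l<n*Suc m. g l) = (\<Sum>l<n*m + n. g l)" by (simp add: add.commute)
  also have "\<dots> = (\<Sum>l<n*m. g l) + (\<Sum>i<n. g (n*m + i))" by (rule sum_split_add)
  finally show ?case using Suc by simp
qed simp

lemma Digamma_mult:
  fixes r :: real assumes r: "r > 0" and n: "n > 0"
  shows "(\<Sum>i<n. Digamma (of_real r + of_nat i / of_nat n :: complex)) =
         of_nat n * Digamma (of_nat n * of_real r) - of_nat n * of_real (ln (real n))"
proof -
  define f where "f m = (\<Sum>i<n. of_real (ln (real m)) -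
       (\<Sum>k<m. inverse (of_real r + of_nat i / of_nat n + of_nat k :: complex)))" for m
  define h where "h m = of_real (ln (real m)) - (\<Sum>l<m. inverse (of_nat n * of_real r + of_nat l :: complex))" for m
  have nz1: "(of_real r + of_nat i / of_nat n :: complex) \<noteq> 0" for i
  proof
    assume "(of_real r + of_nat i / of_nat n :: complex) = 0"
    then have "Re (of_real r + of_nat i / of_nat n :: complex) = 0" by simp
    then show False using r n by simp (smt (verit) divide_nonneg_nonneg of_nat_0_le_iff)
  qed
  have L1: "f \<longlonglongrightarrow> (\<Sum>i<n. Digamma (of_real r + of_nat i / of_nat n :: complex))"
    unfolding f_def by (intro tendsto_sum Digamma_LIMSEQ nz1)
  have nz2: "(of_nat n * of_real r :: complex) \<noteq> 0" using r n by simp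
  have "h \<longlonglongrightarrow> Digamma (of_nat n * of_real r :: complex)"
    unfolding h_def by (rule Digamma_LIMSEQ[OF nz2])
  moreover have "strict_mono (\<lambda>m. n * m)" using n by (intro strict_monoI) simp
  ultimately have "(\<lambda>m. h (n * m)) \<longlonglongrightarrow> Digamma (of_nat n * of_real r :: complex)"
    by (rule LIMSEQ_subseq_LIMSEQ[unfolded o_def])
  then have L2: "(\<lambda>m. of_nat n * h (n * m) - of_nat n * of_real (ln (real n))) \<longlonglongrightarrow>
      of_nat n * Digamma (of_nat n * of_real r) - of_nat n * of_real (ln (real n))"
    by (intro tendsto_intros)
  have ev: "eventually (\<lambda>m. of_nat n * h (n * m) - of_nat n * of_real (ln (real n)) = f m) sequentially"
    using eventually_gt_at_top[of 0]
  proof (rule eventually_mono)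
    fix m :: nat assume m: "m > 0"
    have inv: "inverse (of_real r + of_nat i / of_nat n + of_nat k :: complex) =
        of_nat n * inverse (of_nat n * of_real r + of_nat (n * k + i))" for i k
    proof -
      have a: "(of_real r + of_nat i / of_nat n + of_nat k :: complex) \<noteq> 0"
      proof
        assume "(of_real r + of_nat i / of_nat n + of_nat k :: complex) = 0"
        then have "Re (of_real r + of_nat i / of_nat n + of_nat k :: complex) = 0" by simp
        then show False using r n by simp (smt (verit) divide_nonneg_nonneg of_nat_0_le_iff)
      qed
      have "(of_nat n * of_real r + of_nat (n * k + i) :: complex) =
            of_nat n * (of_real r + of_nat i / of_nat n + of_nat k)" using n by (simp add: field_simps)
      then show ?thesis using a n by (simp add: field_simps)
    qed
    have "f m = of_nat n * of_real (ln (real m)) -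
        (\<Sum>i<n. \<Sum>k<m. of_nat n * inverse (of_nat n * of_real r + of_nat (n * k + i) :: complex))"
      unfolding f_def inv by (simp add: sum_subtractf)
    also have "(\<Sum>i<n. \<Sum>k<m. of_nat n * inverse (of_nat n * of_real r + of_nat (n * k + i) :: complex)) =
        of_nat n * (\<Sum>k<m. \<Sum>i<n. inverse (of_nat n * of_real r + of_nat (n * k + i) :: complex))"
      by (subst sum.swap) (simp add: sum_distrib_left)
    also have "(\<Sum>k<m. \<Sum>i<n. inverse (of_nat n * of_real r + of_nat (n * k + i) :: complex)) =
        (\<Sum>l<n*m. inverse (of_nat n * of_real r + of_nat l :: complex))"
      by (rule sum_group[symmetric])
    also have "of_real (ln (real m)) = (of_real (ln (real (n * m))) - of_real (ln (real n)) :: complex)"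
      using m n by (simp add: ln_mult)
    finally show "of_nat n * h (n * m) - of_nat n * of_real (ln (real n)) = f m"
      unfolding h_def by (simp add: algebra_simps)
  qed
  from Lim_transform_eventually[OF L2 ev] L1 show ?thesis
    using LIMSEQ_unique by metis
qed



lemma prime_coprime_iff: "prime (q::nat) \<Longrightarrow> coprime a q \<longleftrightarrow> \<not> q dvd a"
  by (metis coprime_commute prime_imp_coprime coprime_common_divisor dvd_refl not_prime_unit)

definition spn :: "nat \<Rightarrow> complex set \<Rightarrow> complex set" where
  "spn N T = {x. \<exists>c. (\<forall>t\<in>T. c t \<in> Rg N) \<and> x = (\<Sum>t\<in>T. c t * t)}"

definition EE :: "real \<Rightarrow> complex" where
  "EE r = Digamma (complex_of_real r) + euler_mascheroni"

lemma spn_add: "x \<in> spn N T \<Longrightarrow> y \<in> spn N T \<Longrightarrow> x + y \<in> spn N T"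
proof -
  assume "x \<in> spn N T" "y \<in> spn N T"
  then obtain c d where "\<forall>t\<in>T. c t \<in> Rg N" "x = (\<Sum>t\<in>T. c t * t)"
     "\<forall>t\<in>T. d t \<in> Rg N" "y = (\<Sum>t\<in>T. d t * t)" unfolding spn_def by auto
  then show ?thesis unfolding spn_def
    by (intro CollectI exI[of _ "\<lambda>t. c t + d t"]) (auto simp: sum.distrib algebra_simps intro: Rg_add)
qed

lemma spn_scal: "N > 0 \<Longrightarrow> k \<in> Rg N \<Longrightarrow> x \<in> spn N T \<Longrightarrow> k * x \<in> spn N T"
proof -
  assume k: "N > 0" "k \<in> Rg N" "x \<in> spn N T"
  then obtain c where "\<forall>t\<in>T. c t \<in> Rg N" "x = (\<Sum>t\<in>T. c t * t)" unfolding spn_def by auto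
  then show ?thesis unfolding spn_def using k
    by (intro CollectI exI[of _ "\<lambda>t. k * c t"]) (auto simp: sum_distrib_left algebra_simps intro: Rg_mult)
qed

lemma spn_0: "0 \<in> spn N T"
  unfolding spn_def by (intro CollectI exI[of _ "\<lambda>t. 0"]) (auto intro: Rg_0)

lemma spn_sum: "(\<And>i. i \<in> A \<Longrightarrow> f i \<in> spn N T) \<Longrightarrow> sum f A \<in> spn N T"
  by (induction A rule: infinite_finite_induct) (auto intro: spn_0 spn_add)

lemma spn_base: assumes "finite T" "t \<in> T" "N > 0" shows "t \<in> spn N T"
proof -
  have e: "(\<lambda>s. (if s = t then 1 else 0) * s) = (\<lambda>s. if s = t then s else 0)" by auto
  have "(\<Sum>s\<in>T. (if s = t then 1 else 0) * s) = t" unfolding e using assms by (simp add: sum.delta')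
  then show ?thesis unfolding spn_def using assms
    by (intro CollectI exI[of _ "\<lambda>s. if s = t then 1 else 0"]) (auto intro: Rg_0 Rg_rat)
qed

lemma spn_diff: "N > 0 \<Longrightarrow> x \<in> spn N T \<Longrightarrow> y \<in> spn N T \<Longrightarrow> x - y \<in> spn N T"
  using spn_add[of x N T "(-1) * y"] spn_scal[of N "-1" y T] Rg_rat[of N "-1"] by simp

lemma indep_card:
  assumes T: "finite T" and N: "N > 0" and S: "S \<subseteq> spn N T" and ind: "alg_lin_indep S"
  shows "card S \<le> card T"
proof (rule ccontr)
  assume "\<not> card S \<le> card T"
  then have lt: "card T < card S" by simp
  have fS: "finite S" using ind unfolding alg_lin_indep_def by simp
  have "\<forall>s\<in>S. \<exists>c. (\<forall>t\<in>T. c t \<in> Rg N) \<and> s = (\<Sum>t\<in>T. c t * t)"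
    using S unfolding spn_def by blast
  then obtain A where A: "\<And>s t. s \<in> S \<Longrightarrow> t \<in> T \<Longrightarrow> A s t \<in> Rg N"
      "\<And>s. s \<in> S \<Longrightarrow> s = (\<Sum>t\<in>T. A s t * t)" by metis
  have "\<exists>x. (\<forall>k\<in>S. x k \<in> Rg N) \<and> (\<exists>k\<in>S. x k \<noteq> 0) \<and> (\<forall>i\<in>T. (\<Sum>k\<in>S. A k i * x k) = 0)"
    by (rule homog_solve[where P = "\<lambda>x. x \<in> Rg N"])
      (auto intro: Rg_0 Rg_rat Rg_add Rg_mult Rg_neg N T fS lt A(1))
  then obtain c where c: "\<And>s. s \<in> S \<Longrightarrow> c s \<in> Rg N" "\<exists>s\<in>S. c s \<noteq> 0"
     "\<And>t. t \<in> T \<Longrightarrow> (\<Sum>s\<in>S. A s t * c s) = 0" by blast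
  have "(\<Sum>s\<in>S. c s * s) = (\<Sum>s\<in>S. \<Sum>t\<in>T. c s * A s t * t)"
    by (intro sum.cong refl) (subst A(2), auto simp: sum_distrib_left mult.assoc)
  also have "\<dots> = (\<Sum>t\<in>T. \<Sum>s\<in>S. c s * A s t * t)" by (rule sum.swap)
  also have "\<dots> = (\<Sum>t\<in>T. (\<Sum>s\<in>S. A s t * c s) * t)"
    unfolding sum_distrib_right by (simp add: mult_ac)
  also have "\<dots> = 0" using c(3) by simp
  finally have "(\<Sum>s\<in>S. c s * s) = 0" .
  moreover have "\<forall>s\<in>S. algebraic (c s)" using c(1) Rg_algebraic[OF N] by blast
  ultimately have "\<forall>s\<in>S. c s = 0" using ind unfolding alg_lin_indep_def by blast
  with c(2) show False by blast
qed

lemma aux_frac: fixes a x :: complex assumes "a \<noteq> 0" "x + a \<noteq> 0" "x \<noteq> 0"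
  shows "1 / (a * (x + a)) = (inverse a - inverse (x + a)) / x"
proof -
  have "inverse a - inverse (x + a) = ((x + a) - a) / (a * (x + a))"
    using assms by (simp add: inverse_eq_divide diff_frac_eq)
  also have "\<dots> = x / (a * (x + a))" by simp
  finally show ?thesis using assms by simp
qed

lemma harm_EE:
  assumes r: "r > 0" shows "Defs.harm (of_real r) = EE r + of_real (1 / r)"
proof -
  define x where "x = (of_real r :: complex)"
  have x0: "x \<noteq> 0" using r unfolding x_def by simp
  have nz: "x + of_nat (Suc k) \<noteq> 0" for k
  proof
    assume "x + of_nat (Suc k) = 0"
    then have "Re (x + of_nat (Suc k)) = 0" by simp
    then show False using r unfolding x_def by simp
  qed
  define h where "h k = inverse (of_nat (Suc k)) - inverse (x + 1 + of_nat k)" for k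
  have sh: "summable h" unfolding h_def using summable_Digamma[of "x + 1"] nz[of 0] by simp
  have hs: "suminf h = Digamma (x + 1) + euler_mascheroni"
    unfolding h_def Digamma_def by simp
  have g: "1 / (of_nat (Suc k) * (x + of_nat (Suc k))) = h k / x" for k
  proof -
    have k1: "(of_nat (Suc k) :: complex) \<noteq> 0" by (rule of_nat_neq_0)
    have e: "x + 1 + of_nat k = x + of_nat (Suc k)" by simp
    show ?thesis unfolding h_def e using nz[of k] x0 k1 aux_frac by blast
  qed
  have "Defs.harm x = x * (\<Sum>k. h k / x)" unfolding Defs.harm_def g ..
  also have "(\<Sum>k. h k / x) = suminf h / x" using sh by (simp add: suminf_divide)
  also have "x * (suminf h / x) = suminf h" using x0 by simp
  finally have "Defs.harm x = Digamma (x + 1) + euler_mascheroni" using hs by simp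
  also have "Digamma (x + 1) = Digamma x + 1 / x" by (rule Digamma_plus1[OF x0])
  finally show ?thesis unfolding x_def EE_def by simp
qed

lemma EE_1: "EE 1 = 0" unfolding EE_def by simp
lemma EE_half: "EE (1/2) = - of_real (2 * ln 2)" unfolding EE_def
  using Digamma_one_half[where 'a=complex] by simp

lemma EE_mult:
  assumes "r > 0" "n > 0"
  shows "(\<Sum>i<n. EE (r + real i / real n)) = of_nat n * EE (real n * r) - of_nat n * of_real (ln (real n))"
proof -
  have "(\<Sum>i<n. EE (r + real i / real n)) =
     (\<Sum>i<n. Digamma (of_real r + of_nat i / of_nat n :: complex)) + of_nat n * euler_mascheroni"
    unfolding EE_def by (simp add: sum.distrib)
  also have "\<dots> = of_nat n * Digamma (of_nat n * of_real r) - of_nat n * of_real (ln (real n)) + of_nat n * euler_mascheroni"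
    by (subst Digamma_mult[OF assms]) simp
  finally show ?thesis unfolding EE_def by (simp add: algebra_simps)
qed

lemma EE_refl:
  assumes "0 < x" "x < 1" shows "EE (1 - x) = EE x + of_real pi * cot (of_real pi * of_real x)"
proof -
  have "complex_of_real x \<notin> \<int>"
  proof
    assume "complex_of_real x \<in> \<int>"
    then have "x \<in> \<int>" by (simp add: of_real_in_Ints_iff)
    then obtain n :: int where "x = of_int n" by (auto elim: Ints_cases)
    with assms show False by auto
  qed
  from Digamma_refl[OF this] show ?thesis unfolding EE_def by simp
qed



locale qctx =
  fixes N q m :: nat and T :: "complex set"
  assumes N0: "N > 0" and N4: "4 dvd N" and NQ: "2 * q ^ m dvd N"
    and qp: "prime q" and qo: "odd q"
    and Tf: "finite T" and T1: "1 \<in> T" and Tpi: "complex_of_real pi \<in> T"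
    and Tl2: "complex_of_real (ln 2) \<in> T"
    and TB: "\<And>a. 1 \<le> a \<Longrightarrow> 2 * a < q ^ m \<Longrightarrow> coprime a q \<Longrightarrow> EE (real a / real (q ^ m)) \<in> T"
begin

abbreviation "V \<equiv> spn N T"

lemma V_base: "t \<in> T \<Longrightarrow> t \<in> V" using spn_base Tf N0 by blast

lemma V_scal: "k \<in> \<rat> \<Longrightarrow> x \<in> V \<Longrightarrow> k * x \<in> V" using spn_scal N0 Rg_rat by blast

lemma V_rat: "x \<in> \<rat> \<Longrightarrow> x \<in> V"
  using V_scal[of x 1] V_base[OF T1] by simp

lemma V_add: "x \<in> V \<Longrightarrow> y \<in> V \<Longrightarrow> x + y \<in> V" by (rule spn_add)
lemma V_diff: "x \<in> V \<Longrightarrow> y \<in> V \<Longrightarrow> x - y \<in> V" by (rule spn_diff[OF N0])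

lemma q_ge3: "q \<ge> 3"
proof -
  have "q \<ge> 2" using qp by (simp add: prime_ge_2_nat)
  moreover have "q \<noteq> 2" using qo by auto
  ultimately show ?thesis by simp
qed

lemma Q_odd: "odd (q ^ m)" using qo by simp
lemma Q_dvd: "q ^ m dvd N" using NQ dvd_mult_right by blast
lemma Q_pos: "q ^ j > 0" using q_ge3 by simp

lemma V_picot: "0 < a \<Longrightarrow> a < b \<Longrightarrow> b dvd N \<Longrightarrow>
    of_real pi * cot (of_real pi * of_nat a / of_nat b) \<in> V"
  using spn_scal[OF N0 cot_Rg[OF N0 _ N4] V_base[OF Tpi], of b a] by (simp add: mult.commute)

lemma V_refl: assumes "0 < a" "a < b" "b dvd N" "EE (real a / real b) \<in> V"
  shows "EE (real (b - a) / real b) \<in> V"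
proof -
  have x: "0 < real a / real b" "real a / real b < 1" using assms by auto
  have "real (b - a) / real b = 1 - real a / real b" using assms by (simp add: of_nat_diff field_simps)
  then have "EE (real (b - a) / real b) = EE (real a / real b) + of_real pi * cot (of_real pi * of_nat a / of_nat b)"
    using EE_refl[OF x] by simp
  then show ?thesis using V_add[OF assms(4) V_picot[OF assms(1-3)]] by simp
qed

lemma not_dvd_coprime: "coprime a q \<longleftrightarrow> \<not> q dvd a" using prime_coprime_iff[OF qp] .

lemma V_top: assumes "1 \<le> m" "1 \<le> b" "b < q ^ m" "coprime b q"
  shows "EE (real b / real (q ^ m)) \<in> V"
proof (cases "2 * b < q ^ m")
  case True
  then show ?thesis using TB assms V_base by blast
next
  case False
  then have b2: "2 * b > q ^ m" using Q_odd by (metis dvd_triv_left le_neq_implies_less not_le)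
  define a where "a = q ^ m - b"
  have a: "1 \<le> a" "2 * a < q ^ m" "a < q ^ m" using b2 assms unfolding a_def by auto
  have "q dvd q ^ m" using assms(1) by (simp add: dvd_power)
  then have "coprime a q" using assms(4) unfolding a_def not_dvd_coprime
    using assms(3) dvd_diff_nat[of q "q ^ m" "q ^ m - b"] by auto
  then have "EE (real a / real (q ^ m)) \<in> V" using TB a V_base by blast
  from V_refl[OF _ a(3) Q_dvd this] a have "EE (real (q ^ m - a) / real (q ^ m)) \<in> V" by simp
  moreover have "q ^ m - a = b" using assms unfolding a_def by simp
  ultimately show ?thesis by simp
qed

lemma FF: "(\<Sum>a\<in>{1..<q^j}. EE (real a / real (q ^ j))) =
    - of_nat j * of_nat (q ^ j) * of_real (ln (real q))"
proof -
  define n where "n = q ^ j"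
  have n: "n > 0" unfolding n_def by (rule Q_pos)
  have "(\<Sum>i<n. EE (1 / real n + real i / real n)) = of_nat n * EE (real n * (1 / real n)) - of_nat n * of_real (ln (real n))"
    by (rule EE_mult) (use n in auto)
  also have "EE (real n * (1 / real n)) = 0" using n EE_1 by simp
  also have "ln (real n) = real j * ln (real q)" unfolding n_def by (simp add: ln_realpow)
  finally have e1: "(\<Sum>i<n. EE (1 / real n + real i / real n)) = - of_nat n * (of_nat j * of_real (ln (real q)))"
    by simp
  have "(\<Sum>i<n. EE (1 / real n + real i / real n)) = (\<Sum>i<n. EE (real (Suc i) / real n))"
    by (simp add: add_divide_distrib)
  also have "\<dots> = (\<Sum>a\<in>{1..n}. EE (real a / real n))" by (simp add: sum.atLeast1_atMost_eq)
  also have "{1..n} = insert n {1..<n}" using n by auto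
  also have "(\<Sum>a\<in>insert n {1..<n}. EE (real a / real n)) = EE (real n / real n) + (\<Sum>a\<in>{1..<n}. EE (real a / real n))"
    by simp
  also have "EE (real n / real n) = 0" using n EE_1 by simp
  finally show ?thesis using e1 unfolding n_def by simp
qed

lemma coprime_sum: assumes j: "1 \<le> j"
  shows "(\<Sum>a\<in>{a\<in>{1..<q^j}. coprime a q}. EE (real a / real (q ^ j))) =
    - (of_nat j * of_nat (q ^ j) - of_nat (j - 1) * of_nat (q ^ (j - 1))) * of_real (ln (real q))"
proof -
  have qj: "q ^ j = q * q ^ (j - 1)" using j by (metis Suc_diff_le diff_Suc_1 power_Suc)
  define f where "f a = EE (real a / real (q ^ j))" for a
  have split: "sum f {1..<q^j} = sum f ({1..<q^j} \<inter> {a. coprime a q}) + sum f ({1..<q^j} - {a. coprime a q})"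
    by (rule sum.Int_Diff) simp
  have M: "{1..<q^j} - {a. coprime a q} = (\<lambda>b. q * b) ` {1..<q^(j-1)}"
  proof (rule set_eqI, rule iffI)
    fix a assume "a \<in> {1..<q^j} - {a. coprime a q}"
    then have a: "1 \<le> a" "a < q ^ j" "q dvd a" using not_dvd_coprime by auto
    then obtain b where b: "a = q * b" by auto
    then have "1 \<le> b" using a by (cases b) auto
    moreover have "b < q ^ (j - 1)" using a(2) b qj q_ge3 by simp
    ultimately show "a \<in> (\<lambda>b. q * b) ` {1..<q^(j-1)}" using b by auto
  next
    fix a assume "a \<in> (\<lambda>b. q * b) ` {1..<q^(j-1)}"
    then obtain b where bb: "b \<in> {1..<q^(j-1)}" "a = q * b" by (rule imageE)
    then have b: "a = q * b" "1 \<le> b" "b < q ^ (j - 1)" by auto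
    then have "a < q ^ j" using qj q_ge3 by simp
    moreover have "1 \<le> a" using b q_ge3 by simp
    moreover have "\<not> coprime a q" using b not_dvd_coprime by simp
    ultimately show "a \<in> {1..<q^j} - {a. coprime a q}" by auto
  qed
  have "sum f ((\<lambda>b. q * b) ` {1..<q^(j-1)}) = (\<Sum>b\<in>{1..<q^(j-1)}. f (q * b))"
    by (rule sum.reindex[unfolded o_def]) (use q_ge3 in \<open>auto simp: inj_on_def\<close>)
  also have "\<dots> = (\<Sum>b\<in>{1..<q^(j-1)}. EE (real b / real (q ^ (j - 1))))"
    unfolding f_def using q_ge3 by (intro sum.cong refl) (simp add: qj)
  also have "\<dots> = - of_nat (j - 1) * of_nat (q ^ (j - 1)) * of_real (ln (real q))" by (rule FF)
  finally have eM: "sum f ({1..<q^j} - {a. coprime a q}) = - of_nat (j - 1) * of_nat (q ^ (j - 1)) * of_real (ln (real q))"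
    unfolding M .
  have eC: "{a\<in>{1..<q^j}. coprime a q} = {1..<q^j} \<inter> {a. coprime a q}" by auto
  have "sum f {1..<q^j} = - of_nat j * of_nat (q ^ j) * of_real (ln (real q))"
    unfolding f_def by (rule FF)
  then show ?thesis using split eM unfolding eC f_def by (simp add: algebra_simps)
qed

lemma V_lnq: assumes m: "1 \<le> m" shows "of_real (ln (real q)) \<in> V"
proof -
  define c where "c = m * q ^ m - (m - 1) * q ^ (m - 1)"
  have qm: "q ^ m = q * q ^ (m - 1)" using m by (metis Suc_diff_le diff_Suc_1 power_Suc)
  have lt1: "q ^ (m - 1) < q ^ m" unfolding qm using q_ge3 Q_pos[of "m-1"] by simp
  have "(m - 1) * q ^ (m - 1) \<le> m * q ^ (m - 1)" by simp
  also have "\<dots> < m * q ^ m" using lt1 m by simp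
  finally have lt: "(m - 1) * q ^ (m - 1) < m * q ^ m" .
  then have c0: "c > 0" unfolding c_def by simp
  have cc: "(of_nat m * of_nat (q ^ m) - of_nat (m - 1) * of_nat (q ^ (m - 1)) :: complex) = of_nat c"
    unfolding c_def using lt by (simp add: of_nat_diff)
  have "(\<Sum>a\<in>{a\<in>{1..<q^m}. coprime a q}. EE (real a / real (q ^ m))) \<in> V"
    by (intro spn_sum V_top) (use m in auto)
  moreover have "(\<Sum>a\<in>{a\<in>{1..<q^m}. coprime a q}. EE (real a / real (q ^ m))) = - of_nat c * of_real (ln (real q))"
    by (rule coprime_sum[OF m, unfolded cc])
  ultimately have "- of_nat c * of_real (ln (real q)) \<in> V" by (simp only:)
  from V_scal[OF _ this, of "- 1 / of_nat c"] c0 show ?thesis by simp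
qed

lemma V_A_aux: "\<forall>j b. m - j = d \<longrightarrow> 1 \<le> j \<longrightarrow> j \<le> m \<longrightarrow> 1 \<le> b \<longrightarrow> b < q ^ j \<longrightarrow> coprime b q \<longrightarrow>
    EE (real b / real (q ^ j)) \<in> V"
proof (induction d)
  case 0
  then show ?case using V_top by auto
next
  case (Suc d)
  show ?case
  proof (intro allI impI)
    fix j b assume h: "m - j = Suc d" "1 \<le> j" "j \<le> m" "1 \<le> b" "b < q ^ j" "coprime b q"
    have m1: "1 \<le> m" using h by simp
    have qs: "q ^ Suc j = q * q ^ j" by simp
    define r where "r = real b / real (q ^ Suc j)"
    have r0: "r > 0" unfolding r_def using h Q_pos[of "Suc j"] by simp
    have q0: "q > 0" using q_ge3 by simp
    have "(\<Sum>i<q. EE (r + real i / real q)) = of_nat q * EE (real q * r) - of_nat q * of_real (ln (real q))"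
      by (rule EE_mult[OF r0 q0])
    moreover have "real q * r = real b / real (q ^ j)" unfolding r_def qs using q0 by simp
    moreover have "r + real i / real q = real (b + i * q ^ j) / real (q ^ Suc j)" for i
      unfolding r_def qs using q0 Q_pos[of j] by (simp add: field_simps)
    ultimately have eq: "of_nat q * EE (real b / real (q ^ j)) =
        (\<Sum>i<q. EE (real (b + i * q ^ j) / real (q ^ Suc j))) + of_nat q * of_real (ln (real q))"
      by simp
    have IH: "EE (real (b + i * q ^ j) / real (q ^ Suc j)) \<in> V" if i: "i < q" for i
    proof -
      have "b + i * q ^ j < q ^ j + i * q ^ j" using h by simp
      also have "\<dots> = (Suc i) * q ^ j" by simp
      also have "\<dots> \<le> q * q ^ j" using i by (intro mult_right_mono) auto
      finally have lt: "b + i * q ^ j < q ^ Suc j" by simp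
      have "q dvd i * q ^ j" using h(2) by (simp add: dvd_power)
      then have cop: "coprime (b + i * q ^ j) q" using h(6) unfolding not_dvd_coprime
        by (metis dvd_add_left_iff add.commute)
      show ?thesis by (rule Suc.IH[rule_format]) (use h lt cop in auto)
    qed
    have "(\<Sum>i<q. EE (real (b + i * q ^ j) / real (q ^ Suc j))) + of_nat q * of_real (ln (real q)) \<in> V"
      by (intro V_add spn_sum IH V_scal V_lnq m1) auto
    then have "(1 / of_nat q) * (of_nat q * EE (real b / real (q ^ j))) \<in> V"
      unfolding eq by (intro V_scal) auto
    then show "EE (real b / real (q ^ j)) \<in> V" using q0 by simp
  qed
qed

lemma V_A: "1 \<le> j \<Longrightarrow> j \<le> m \<Longrightarrow> 1 \<le> b \<Longrightarrow> b < q ^ j \<Longrightarrow> coprime b q \<Longrightarrow>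
    EE (real b / real (q ^ j)) \<in> V"
  using V_A_aux[of "m - j"] by blast

lemma V_G0: "j \<le> m \<Longrightarrow> 1 \<le> b \<Longrightarrow> b < q ^ j \<Longrightarrow> EE (real b / real (q ^ j)) \<in> V"
proof (induction j arbitrary: b)
  case 0
  then show ?case by simp
next
  case (Suc j)
  show ?case
  proof (cases "coprime b q")
    case True
    have "1 \<le> Suc j" by simp
    then show ?thesis by (rule V_A) (use Suc.prems True in auto)
  next
    case False
    then obtain b' where b: "b = q * b'" using not_dvd_coprime by auto
    have b1: "1 \<le> b'" using b Suc.prems by (cases b') auto
    have b2: "b' < q ^ j" using b Suc.prems q_ge3 by simp
    have "EE (real b' / real (q ^ j)) \<in> V" using Suc.IH[OF _ b1 b2] Suc.prems by simp
    moreover have "real b / real (q ^ Suc j) = real b' / real (q ^ j)" using b q_ge3 by simp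
    ultimately show ?thesis by simp
  qed
qed

lemma V_half_odd_lt: assumes a: "odd a" "a < q ^ m"
  shows "EE (real a / real (2 * q ^ m)) \<in> V"
proof -
  define Q where "Q = q ^ m"
  have Q0: "Q > 0" unfolding Q_def by (rule Q_pos)
  obtain k where k: "a + Q = 2 * k" using a Q_odd unfolding Q_def by (metis odd_add evenE)
  have k1: "1 \<le> k" "k < Q" using k a Q0 unfolding Q_def by auto
  define r where "r = real a / real (2 * Q)"
  have r0: "r > 0" unfolding r_def using a Q0 by (cases a) auto
  have "(\<Sum>i<2. EE (r + real i / real 2)) = of_nat 2 * EE (real 2 * r) - of_nat 2 * of_real (ln (real 2))"
    by (rule EE_mult[OF r0]) simp
  then have eq: "EE r + EE (r + 1/2) = 2 * EE (real a / real Q) - 2 * of_real (ln 2)"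
    unfolding r_def using Q0 by (simp add: numeral_2_eq_2)
  have "r + 1/2 = real k / real Q"
  proof -
    have "real a + real Q = 2 * real k" using k by (metis of_nat_add of_nat_mult of_nat_numeral)
    then show ?thesis unfolding r_def using Q0 by (simp add: field_simps)
  qed
  then have eq2: "EE r = 2 * EE (real a / real Q) - 2 * of_real (ln 2) - EE (real k / real Q)"
    using eq by (simp add: algebra_simps)
  have "EE (real a / real Q) \<in> V" unfolding Q_def using V_G0[of m a] a by (cases a) auto
  moreover have "EE (real k / real Q) \<in> V" unfolding Q_def using V_G0[of m k] k1 unfolding Q_def by auto
  moreover have two: "(2::complex) \<in> \<rat>" by simp
  ultimately have "2 * EE (real a / real Q) - 2 * of_real (ln 2) - EE (real k / real Q) \<in> V"
    by (intro V_diff V_scal[OF two] V_base[OF Tl2])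
  then show ?thesis using eq2 unfolding r_def Q_def by simp
qed

lemma V_half: assumes a: "1 \<le> a" "a < 2 * q ^ m"
  shows "EE (real a / real (2 * q ^ m)) \<in> V"
proof (cases "even a")
  case True
  then obtain a' where a': "a = 2 * a'" by auto
  then have "1 \<le> a'" "a' < q ^ m" using a by auto
  then have "EE (real a' / real (q ^ m)) \<in> V" using V_G0 by simp
  then show ?thesis using a' by simp
next
  case odd: False
  consider "a = q ^ m" | "a < q ^ m" | "a > q ^ m" by linarith
  then show ?thesis
  proof cases
    case 1
    have "EE (real a / real (2 * q ^ m)) = EE (1/2)" using 1 Q_pos[of m] by simp
    also have "\<dots> = (-2) * of_real (ln 2)" by (simp add: EE_half)
    finally show ?thesis using V_scal[OF _ V_base[OF Tl2], of "-2"] by simp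
  next
    case 2
    then show ?thesis using V_half_odd_lt odd by simp
  next
    case 3
    define a' where "a' = 2 * q ^ m - a"
    have a': "odd a'" "a' < q ^ m" "0 < a'" "a' < 2 * q ^ m" using odd 3 a unfolding a'_def by auto
    have "EE (real a' / real (2 * q ^ m)) \<in> V" using V_half_odd_lt a' by simp
    from V_refl[OF a'(3,4) NQ this] have "EE (real (2 * q ^ m - a') / real (2 * q ^ m)) \<in> V" .
    moreover have "2 * q ^ m - a' = a" using a unfolding a'_def by simp
    ultimately show ?thesis by simp
  qed
qed

lemma V_harm: assumes e: "e \<in> {0, 1}" and a: "1 \<le> a" "a \<le> 2 ^ e * q ^ m - 1"
  shows "Defs.harm (of_nat a / of_nat (2 ^ e * q ^ m)) \<in> V"
proof -
  define D where "D = 2 ^ e * q ^ m"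
  have D0: "D > 0" unfolding D_def using Q_pos by simp
  have aD: "a < D" using a D0 unfolding D_def by linarith
  have r0: "real a / real D > 0" using a D0 by simp
  have "(of_nat a / of_nat D :: complex) = of_real (real a / real D)" by simp
  then have "Defs.harm (of_nat a / of_nat D) = EE (real a / real D) + of_real (1 / (real a / real D))"
    using harm_EE[OF r0] by simp
  also have "of_real (1 / (real a / real D)) = (of_nat D / of_nat a :: complex)" by simp
  finally have h: "Defs.harm (of_nat a / of_nat D) = EE (real a / real D) + of_nat D / of_nat a" .
  have "EE (real a / real D) \<in> V"
  proof (cases "e = 0")
    case True
    then show ?thesis using V_G0[of m a] a aD unfolding D_def by simp
  next
    case False
    then have "e = 1" using e by simp
    then show ?thesis using V_half[of a] a aD unfolding D_def by simp
  qed
  moreover have "(of_nat D / of_nat a :: complex) \<in> V" by (intro V_rat) simp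
  ultimately show ?thesis unfolding D_def[symmetric] h by (rule V_add)
qed

end



lemma half_count:
  fixes q m :: nat assumes qp: "prime q"
  shows "2 * card {a. 1 \<le> a \<and> 2 * a < q ^ m \<and> coprime a q} \<le> totient (q ^ m)"
proof (cases "m = 0")
  case True
  then have e: "{a. 1 \<le> a \<and> 2 * a < q ^ m \<and> coprime a q} = {}" by auto
  show ?thesis unfolding e by simp
next
  case False
  define Q where "Q = q ^ m"
  define H where "H = {a. 1 \<le> a \<and> 2 * a < Q \<and> coprime a q}"
  have fH: "finite H" unfolding H_def by (rule finite_subset[of _ "{..<Q}"]) auto
  have qdQ: "q dvd Q" unfolding Q_def using False by (simp add: dvd_power)
  have cop: "coprime a Q \<longleftrightarrow> coprime a q" for a
    unfolding Q_def using False by (simp add: coprime_power_right_iff)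
  have inj: "inj_on (\<lambda>a. Q - a) H" unfolding H_def inj_on_def by auto
  have disj: "H \<inter> (\<lambda>a. Q - a) ` H = {}" unfolding H_def by auto
  have sub: "H \<union> (\<lambda>a. Q - a) ` H \<subseteq> totatives Q"
  proof
    fix x assume "x \<in> H \<union> (\<lambda>a. Q - a) ` H"
    then show "x \<in> totatives Q"
    proof
      assume "x \<in> H" then show ?thesis unfolding H_def totatives_def using cop by auto
    next
      assume "x \<in> (\<lambda>a. Q - a) ` H"
      then obtain a where a: "a \<in> H" "x = Q - a" by blast
      then have a1: "1 \<le> a" "2 * a < Q" "coprime a q" unfolding H_def by auto
      have "\<not> q dvd Q - a"
      proof
        assume "q dvd Q - a"
        then have "q dvd Q - (Q - a)" using qdQ by (rule dvd_diff_nat[rotated])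
        then have "q dvd a" using a1 by simp
        then show False using a1 prime_coprime_iff[OF qp] by simp
      qed
      then have "coprime x q" using a prime_coprime_iff[OF qp] by simp
      then show ?thesis unfolding totatives_def using a1 a cop by auto
    qed
  qed
  have "2 * card H = card (H \<union> (\<lambda>a. Q - a) ` H)"
    using fH disj inj by (simp add: card_Un_disjoint card_image)
  also have "\<dots> \<le> card (totatives Q)" by (rule card_mono[OF _ sub]) simp
  finally show ?thesis unfolding H_def Q_def totient_def .
qed

theorem theorem3p10:
  fixes J :: "nat set" and m e :: "nat \<Rightarrow> nat"
  assumes "finite J"
    and "\<forall>q\<in>J. prime q \<and> odd q"
    and "3 \<notin> J"
    and "\<forall>q\<in>J. e q \<in> {0, 1}"
  shows "\<forall>S. S \<subseteq> {harm 1} \<union>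
              {harm (of_nat a / of_nat (2 ^ e q * q ^ m q)) | q a.
                 q \<in> J \<and> 1 \<le> a \<and> a \<le> 2 ^ e q * q ^ m q - 1}
            \<longrightarrow> alg_lin_indep S
            \<longrightarrow> real (card S) \<le> (\<Sum>q\<in>J. real (totient (q ^ m q)) / 2) + 3"
proof (intro allI impI)
  fix S
  assume S: "S \<subseteq> {harm 1} \<union>
              {harm (of_nat a / of_nat (2 ^ e q * q ^ m q)) | q a.
                 q \<in> J \<and> 1 \<le> a \<and> a \<le> 2 ^ e q * q ^ m q - 1}"
    and ind: "alg_lin_indep S"
  define N where "N = 4 * (\<Prod>q\<in>J. q ^ m q)"
  define H where "H q = {a. 1 \<le> a \<and> 2 * a < q ^ m q \<and> coprime a q}" for q
  define B where "B q = (\<lambda>a. EE (real a / real (q ^ m q))) ` H q" for q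
  define T where "T = {1, complex_of_real pi, complex_of_real (ln 2)} \<union> (\<Union>q\<in>J. B q)"
  have fH: "finite (H q)" for q unfolding H_def by (rule finite_subset[of _ "{..<q ^ m q}"]) auto
  have fB: "finite (B q)" for q unfolding B_def using fH by simp
  have fT: "finite T" unfolding T_def using fB assms(1) by simp
  have qpos: "q > 0" if "q \<in> J" for q using assms(2) that prime_gt_0_nat by blast
  have N0: "N > 0" unfolding N_def using qpos assms(1) by (simp add: prod_pos)
  have ctx: "qctx N q (m q) T" if q: "q \<in> J" for q
  proof
    show "0 < N" by (rule N0)
    show "4 dvd N" unfolding N_def by simp
    have "q ^ m q dvd (\<Prod>q\<in>J. q ^ m q)" by (rule dvd_prodI[OF assms(1) q])
    then show "2 * q ^ m q dvd N" unfolding N_def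
      by (rule mult_dvd_mono[of 2 4, rotated]) simp
    show "prime q" "odd q" using assms(2) q by auto
    show "finite T" by (rule fT)
    show "1 \<in> T" "complex_of_real pi \<in> T" "complex_of_real (ln 2) \<in> T" unfolding T_def by auto
    show "EE (real a / real (q ^ m q)) \<in> T" if "1 \<le> a" "2 * a < q ^ m q" "coprime a q" for a
      unfolding T_def B_def H_def using that q by blast
  qed
  have SV: "S \<subseteq> spn N T"
  proof
    fix x assume "x \<in> S"
    then have "x = harm 1 \<or> (\<exists>q a. x = harm (of_nat a / of_nat (2 ^ e q * q ^ m q)) \<and>
                 q \<in> J \<and> 1 \<le> a \<and> a \<le> 2 ^ e q * q ^ m q - 1)" using S by blast
    then show "x \<in> spn N T"
    proof
      assume x: "x = harm 1"
      have "harm 1 = 1" using harm_EE[of 1] EE_1 by simp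
      then show ?thesis using x spn_base[OF fT _ N0] unfolding T_def by auto
    next
      assume "\<exists>q a. x = harm (of_nat a / of_nat (2 ^ e q * q ^ m q)) \<and>
                 q \<in> J \<and> 1 \<le> a \<and> a \<le> 2 ^ e q * q ^ m q - 1"
      then obtain q a where qa: "x = harm (of_nat a / of_nat (2 ^ e q * q ^ m q))" "q \<in> J"
          "1 \<le> a" "a \<le> 2 ^ e q * q ^ m q - 1" by blast
      show ?thesis unfolding qa(1)
        by (rule qctx.V_harm[OF ctx[OF qa(2)]]) (use assms(4) qa in auto)
    qed
  qed
  have cS: "card S \<le> card T" by (rule indep_card[OF fT N0 SV ind])
  have "card T \<le> card {1, complex_of_real pi, complex_of_real (ln 2)} + card (\<Union>q\<in>J. B q)"
    unfolding T_def by (rule card_Un_le)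
  also have "card {1, complex_of_real pi, complex_of_real (ln 2)} \<le> 3" by (simp add: card_insert_le_m1)
  also have "card (\<Union>q\<in>J. B q) \<le> (\<Sum>q\<in>J. card (B q))" by (rule card_UN_le[OF assms(1)])
  finally have cT: "card T \<le> 3 + (\<Sum>q\<in>J. card (B q))" by simp
  have cB: "real (card (B q)) \<le> real (totient (q ^ m q)) / 2" if q: "q \<in> J" for q
  proof -
    have "card (B q) \<le> card (H q)" unfolding B_def by (rule card_image_le[OF fH])
    moreover have "2 * card (H q) \<le> totient (q ^ m q)"
      unfolding H_def by (rule half_count) (use assms(2) q in auto)
    ultimately show ?thesis by linarith
  qed
  have "real (card S) \<le> 3 + (\<Sum>q\<in>J. real (card (B q)))"
    using cS cT by (metis (mono_tags) le_trans of_nat_le_iff of_nat_add of_nat_sum of_nat_numeral)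
  also have "\<dots> \<le> 3 + (\<Sum>q\<in>J. real (totient (q ^ m q)) / 2)"
    using cB by (intro add_left_mono sum_mono) auto
  finally show "real (card S) \<le> (\<Sum>q\<in>J. real (totient (q ^ m q)) / 2) + 3" by simp
qed


end
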